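(* Let $d\in\{1,2\}$. With the polymer defined using the scaling constants $c_{N,d}$ (which satisfy $\lim_{N\to\infty}c_{N,1}^2N^{1/2}=0$ if $d=1$ and $\lim_{N\to\infty}c_{N,2}^2\log N=0$ if $d=2$), the rescaled mean square displacement satisfies $$\frac{\langle \omega(N)^2\rangle_{N,h}}{N}\longrightarrow 1$$ in probability (with respect to $Q$) as $N\to\infty$.
   Context: For $N\ge 1$, $P^N_0$ is the uniform probability measure on nearest-neighbour walks $\omega:\{0,1,\dots,N\}\to\mathbb{Z}^d$ with $\omega(0)=0$ and $|\omega(n)-\omega(n-1)|=1$ (each of the $(2d)^N$ walks has weight $(2d)^{-N}$). The random environment $h=\{h(n,x):n\in\mathbb{N},x\in\mathbb{Z}^d\}$ is a family of i.i.d. random variables with $h(n,x)=\pm1$ each with probability $1/2$, defined on a probability space $(H,\mathcal{G},Q)$ and independent of the walk; $E_Q$ denotes expectation under $Q$. $(c_{N,d})_N$ is a sequence of positive numbers with $\lim_{N\to\infty}c^2_{N,1}N^{1/2}=0$ for $d=1$ and $\lim_{N\to\infty}c^2_{N,2}\log N=0$ for $d=2$. The unnormalized polymer density is $p(N,x)=\int 1_{[\omega(N)=x]}\prod_{n=1}^N[1+c_{N,d}h(n,\omega(n))]\,dP^N_0(\omega)$, the partition function is $Z(N)=\sum_x p(N,x)$, $p_N(N,x)=p(N,x)/Z(N)$, and $\langle\omega(N)^2\rangle_{N,h}=\sum_{x\in\mathbb{Z}^d}|x|^2p_N(N,x)$. *)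

theory Defs
  imports "HOL-Probability.Probability"
begin

text \<open>Points of \<open>\<int>^d\<close> are represented as integer lists of length \<open>d\<close>.\<close>

definition lattice :: "nat \<Rightarrow> int list set" where
  "lattice d = {x. length x = d}"

definition unit_steps :: "nat \<Rightarrow> int list set" where
  "unit_steps d = {v. length v = d \<and> (\<Sum>i<d. \<bar>v ! i\<bar>) = 1}"

text \<open>A nearest-neighbour walk of length \<open>N\<close> started at 0 is encoded by its list of
  increments \<open>s\<close> (length \<open>N\<close>, each a unit step); \<open>walk_pos d s n = \<omega>(n)\<close>.\<close>
definition walks :: "nat \<Rightarrow> nat \<Rightarrow> int list list set" where
  "walks d N = {s. length s = N \<and> set s \<subseteq> unit_steps d}"

definition walk_pos :: "nat \<Rightarrow> int list list \<Rightarrow> nat \<Rightarrow> int list" where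
  "walk_pos d s n = map (\<lambda>i. \<Sum>k<n. s ! k ! i) [0..<d]"

definition sqnorm :: "int list \<Rightarrow> real" where
  "sqnorm x = (\<Sum>i<length x. real_of_int (x ! i) ^ 2)"

text \<open>Unnormalized polymer density \<open>p(N,x)\<close> for environment \<open>h\<close> (as a function of
  \<open>n\<close> and site) and coupling constant \<open>cN\<close>:
  integral of \<open>1[\<omega>(N)=x] \<Prod>_{n=1}^N (1 + cN h(n,\<omega>(n)))\<close> against the uniform measure
  \<open>P_0^N\<close> (weight \<open>(2d)^{-N}\<close> per walk).\<close>
definition polymer_p :: "nat \<Rightarrow> real \<Rightarrow> (nat \<Rightarrow> int list \<Rightarrow> real) \<Rightarrow> nat \<Rightarrow> int list \<Rightarrow> real" where
  "polymer_p d cN h N x =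
     (\<Sum>s\<in>walks d N. (if walk_pos d s N = x then 1 else 0) *
        (\<Prod>n=1..N. 1 + cN * h n (walk_pos d s n))) / (2 * real d) ^ N"

text \<open>All endpoints lie in the box \<open>{x. \<forall>i. |x_i| \<le> N}\<close>, so sums over \<open>\<int>^d\<close> of
  quantities supported on possible endpoints are taken over this finite box.\<close>
definition box :: "nat \<Rightarrow> nat \<Rightarrow> int list set" where
  "box d N = {x \<in> lattice d. \<forall>i<d. \<bar>x ! i\<bar> \<le> int N}"

definition partition_fn :: "nat \<Rightarrow> real \<Rightarrow> (nat \<Rightarrow> int list \<Rightarrow> real) \<Rightarrow> nat \<Rightarrow> real" where
  "partition_fn d cN h N = (\<Sum>x\<in>box d N. polymer_p d cN h N x)"

definition polymer_pN :: "nat \<Rightarrow> real \<Rightarrow> (nat \<Rightarrow> int list \<Rightarrow> real) \<Rightarrow> nat \<Rightarrow> int list \<Rightarrow> real" where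
  "polymer_pN d cN h N x = polymer_p d cN h N x / partition_fn d cN h N"

definition mean_sq_disp :: "nat \<Rightarrow> real \<Rightarrow> (nat \<Rightarrow> int list \<Rightarrow> real) \<Rightarrow> nat \<Rightarrow> real" where
  "mean_sq_disp d cN h N = (\<Sum>x\<in>box d N. sqnorm x * polymer_pN d cN h N x)"

end

theory Submission
  imports Defs
begin


definition P :: "int list list \<Rightarrow> nat \<Rightarrow> nat \<Rightarrow> int" where
  "P s n i = (\<Sum>k<n. s ! k ! i)"

lemma walk_pos_P: "walk_pos d s n = map (P s n) [0..<d]"
  by (simp add: walk_pos_def P_def)

lemma P_0[simp]: "P s 0 i = 0" by (simp add: P_def)

lemma P_Cons[simp]: "P (e # s) (Suc n) i = e ! i + P s n i"
  unfolding P_def sum.lessThan_Suc_shift by simp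

lemma walks_0[simp]: "walks d 0 = {[]}"
  by (auto simp: walks_def)

lemma walks_Suc: "walks d (Suc N) = (\<lambda>(e,s). e # s) ` (unit_steps d \<times> walks d N)"
  by (auto simp: walks_def length_Suc_conv image_iff)

lemma unit_steps_abs: "v \<in> unit_steps d \<Longrightarrow> i < d \<Longrightarrow> \<bar>v ! i\<bar> \<le> 1"
proof -
  assume v: "v \<in> unit_steps d" and i: "i < d"
  have "\<bar>v ! i\<bar> \<le> (\<Sum>j<d. \<bar>v ! j\<bar>)"
    using i by (intro member_le_sum) auto
  with v show ?thesis by (simp add: unit_steps_def)
qed

lemma unit_steps_sub: "v \<in> unit_steps d \<Longrightarrow> x \<in> set v \<Longrightarrow> x \<in> {-1,0,1}"
proof -
  assume v: "v \<in> unit_steps d" and x: "x \<in> set v"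
  then obtain i where i: "i < length v" "v ! i = x" by (auto simp: in_set_conv_nth)
  have "length v = d" using v by (simp add: unit_steps_def)
  with unit_steps_abs[OF v] i have "\<bar>x\<bar> \<le> 1" by auto
  then show "x \<in> {-1,0,1}" by (simp add: abs_le_iff) arith
qed

lemma finite_unit_steps: "finite (unit_steps d)"
proof (rule finite_subset)
  show "unit_steps d \<subseteq> {xs. set xs \<subseteq> {-1,0,1} \<and> length xs = d}"
    using unit_steps_sub by (auto simp: unit_steps_def)
  show "finite {xs. set xs \<subseteq> {-1,0,1::int} \<and> length xs = d}"
    by (rule finite_lists_length_eq) auto
qed

lemma finite_walks[simp]: "finite (walks d N)"
  by (induction N) (auto simp: walks_Suc finite_unit_steps)

lemma sum_walks_Suc:
  "(\<Sum>s\<in>walks d (Suc N). f s) = (\<Sum>e\<in>unit_steps d. \<Sum>s\<in>walks d N. f (e # s))"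
proof -
  have inj: "inj_on (\<lambda>(e,s). e # s) (unit_steps d \<times> walks d N)"
    by (auto simp: inj_on_def)
  show ?thesis
    unfolding walks_Suc sum.reindex[OF inj]
    by (simp add: sum.cartesian_product split_beta)
qed

lemma card_walks: "card (walks d N) = card (unit_steps d) ^ N"
proof (induction N)
  case (Suc N)
  have "card (walks d (Suc N)) = (\<Sum>s\<in>walks d (Suc N). 1)" by simp
  also have "\<dots> = card (unit_steps d) * card (walks d N)"
    unfolding sum_walks_Suc by simp
  finally show ?case using Suc by simp
qed simp

lemma walk_pos_len: "length (walk_pos d s n) = d"
  by (simp add: walk_pos_def)

lemma walk_pos_lattice: "walk_pos d s n \<in> lattice d"
  by (simp add: walk_pos_def lattice_def)

lemma walk_pos_eq: "walk_pos d s n = walk_pos d t m \<longleftrightarrow> (\<forall>i<d. P s n i = P t m i)"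
  by (auto simp: walk_pos_P)

lemma sqnorm_walk_pos: "sqnorm (walk_pos d s n) = (\<Sum>i<d. real_of_int (P s n i) ^ 2)"
  by (simp add: sqnorm_def walk_pos_P)

lemma walk_pos_box:
  assumes "s \<in> walks d N"
  shows "walk_pos d s N \<in> box d N"
proof -
  have "\<bar>P s N i\<bar> \<le> int N" if i: "i < d" for i
  proof -
    have "\<bar>P s N i\<bar> \<le> (\<Sum>k<N. \<bar>s ! k ! i\<bar>)"
      unfolding P_def by (rule sum_abs)
    also have "\<dots> \<le> (\<Sum>k<N. 1)"
    proof (rule sum_mono)
      fix k assume "k \<in> {..<N}"
      then have "s ! k \<in> unit_steps d" using assms by (auto simp: walks_def)
      then show "\<bar>s ! k ! i\<bar> \<le> 1" using unit_steps_abs i by blast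
    qed
    finally show ?thesis by simp
  qed
  then show ?thesis by (auto simp: box_def lattice_def walk_pos_P)
qed




definition meet :: "nat \<Rightarrow> (nat \<Rightarrow> int) \<Rightarrow> int list list \<Rightarrow> int list list \<Rightarrow> nat \<Rightarrow> bool" where
  "meet d y s t n = (\<forall>i<d. y i + P s n i = P t n i)"

definition sh :: "(nat \<Rightarrow> int) \<Rightarrow> int list \<Rightarrow> int list \<Rightarrow> nat \<Rightarrow> int" where
  "sh y e e' = (\<lambda>i. y i + e ! i - e' ! i)"

definition Lc :: "nat \<Rightarrow> nat \<Rightarrow> (nat \<Rightarrow> int) \<Rightarrow> int list list \<Rightarrow> int list list \<Rightarrow> nat" where
  "Lc d N y s t = (\<Sum>n=1..N. if meet d y s t n then 1 else 0)"

definition KK :: "nat \<Rightarrow> real" where "KK d = real (card (unit_steps d))"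

definition uu :: "nat \<Rightarrow> nat \<Rightarrow> (nat \<Rightarrow> int) \<Rightarrow> real" where
  "uu d m y = (\<Sum>s\<in>walks d m. \<Sum>t\<in>walks d m. if meet d y s t m then 1 else 0) / KK d ^ (2*m)"

definition VV :: "nat \<Rightarrow> real \<Rightarrow> nat \<Rightarrow> (nat \<Rightarrow> int) \<Rightarrow> real" where
  "VV d b N y = (\<Sum>s\<in>walks d N. \<Sum>t\<in>walks d N. b ^ Lc d N y s t) / KK d ^ (2*N)"

abbreviation Z0 :: "nat \<Rightarrow> int" where "Z0 \<equiv> (\<lambda>_. 0)"

lemma meet_Cons[simp]: "meet d y (e#s) (e'#t) (Suc n) = meet d (sh y e e') s t n"
  by (auto simp: meet_def sh_def algebra_simps)

lemma meet_0[simp]: "meet d y s t 0 = (\<forall>i<d. y i = 0)"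
  by (simp add: meet_def)

lemma meet_cong: "(\<And>i. i < d \<Longrightarrow> y i = y' i) \<Longrightarrow> meet d y s t n = meet d y' s t n"
  by (simp add: meet_def)

lemma Lc_cong: "(\<And>i. i < d \<Longrightarrow> y i = y' i) \<Longrightarrow> Lc d N y s t = Lc d N y' s t"
  unfolding Lc_def by (intro sum.cong refl) (simp add: meet_cong[of d y y'])

lemma VV_cong: "(\<And>i. i < d \<Longrightarrow> y i = y' i) \<Longrightarrow> VV d b N y = VV d b N y'"
  unfolding VV_def by (simp add: Lc_cong[of d y y'])

lemma Lc_Suc: "Lc d (Suc N) y (e#s) (e'#t) =
   (if \<forall>i<d. sh y e e' i = 0 then 1 else 0) + Lc d N (sh y e e') s t"
proof -
  have "Lc d (Suc N) y (e#s) (e'#t) = (\<Sum>n=Suc 0..Suc N. if meet d y (e#s) (e'#t) n then 1 else 0)"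
    by (simp add: Lc_def)
  also have "\<dots> = (\<Sum>n=0..N. if meet d y (e#s) (e'#t) (Suc n) then 1 else 0)"
    by (rule sum.shift_bounds_cl_Suc_ivl)
  also have "\<dots> = (\<Sum>n=0..N. if meet d (sh y e e') s t n then 1 else 0)"
    by simp
  also have "\<dots> = (if meet d (sh y e e') s t 0 then 1 else 0) + (\<Sum>n=Suc 0..N. if meet d (sh y e e') s t n then 1 else 0)"
    by (rule sum.atLeast_Suc_atMost) simp
  finally show ?thesis by (simp add: Lc_def)
qed

lemma Lc_0[simp]: "Lc d 0 y s t = 0" by (simp add: Lc_def)

lemma sum2_walks_Suc:
  "(\<Sum>s\<in>walks d (Suc N). \<Sum>t\<in>walks d (Suc N). f s t) =
   (\<Sum>e\<in>unit_steps d. \<Sum>e'\<in>unit_steps d. \<Sum>s\<in>walks d N. \<Sum>t\<in>walks d N. f (e#s) (e'#t))"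
proof -
  have "(\<Sum>s\<in>walks d (Suc N). \<Sum>t\<in>walks d (Suc N). f s t) =
     (\<Sum>e\<in>unit_steps d. \<Sum>s\<in>walks d N. \<Sum>e'\<in>unit_steps d. \<Sum>t\<in>walks d N. f (e#s) (e'#t))"
    unfolding sum_walks_Suc ..
  also have "\<dots> = (\<Sum>e\<in>unit_steps d. \<Sum>e'\<in>unit_steps d. \<Sum>s\<in>walks d N. \<Sum>t\<in>walks d N. f (e#s) (e'#t))"
    by (rule sum.cong[OF refl], rule sum.swap)
  finally show ?thesis .
qed

lemma uu_0: "uu d 0 y = (if \<forall>i<d. y i = 0 then 1 else 0)"
  by (simp add: uu_def)

lemma uu_Suc: "uu d (Suc m) y = (\<Sum>e\<in>unit_steps d. \<Sum>e'\<in>unit_steps d. uu d m (sh y e e')) / KK d ^ 2"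
proof -
  have "uu d (Suc m) y = (\<Sum>e\<in>unit_steps d. \<Sum>e'\<in>unit_steps d. \<Sum>s\<in>walks d m. \<Sum>t\<in>walks d m.
      if meet d (sh y e e') s t m then 1 else 0) / (KK d ^ (2*m) * KK d ^ 2)"
    unfolding uu_def sum2_walks_Suc by (simp add: power_add[symmetric])
  also have "\<dots> = (\<Sum>e\<in>unit_steps d. \<Sum>e'\<in>unit_steps d. uu d m (sh y e e')) / KK d ^ 2"
    unfolding uu_def sum_divide_distrib[symmetric] by (simp add: divide_divide_eq_left')
  finally show ?thesis .
qed

lemma VV_0[simp]: "VV d b 0 y = 1" by (simp add: VV_def)

lemma VV_Suc: "VV d b (Suc N) y = (\<Sum>e\<in>unit_steps d. \<Sum>e'\<in>unit_steps d.
    b ^ (if \<forall>i<d. sh y e e' i = 0 then 1 else 0) * VV d b N (sh y e e')) / KK d ^ 2"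
proof -
  have "VV d b (Suc N) y = (\<Sum>e\<in>unit_steps d. \<Sum>e'\<in>unit_steps d. \<Sum>s\<in>walks d N. \<Sum>t\<in>walks d N.
      b ^ (if \<forall>i<d. sh y e e' i = 0 then 1 else 0) * b ^ Lc d N (sh y e e') s t) / (KK d ^ (2*N) * KK d ^ 2)"
    unfolding VV_def sum2_walks_Suc by (simp add: power_add[symmetric] Lc_Suc)
  also have "\<dots> = (\<Sum>e\<in>unit_steps d. \<Sum>e'\<in>unit_steps d.
    b ^ (if \<forall>i<d. sh y e e' i = 0 then 1 else 0) * VV d b N (sh y e e')) / KK d ^ 2"
    unfolding VV_def times_divide_eq_right sum_divide_distrib[symmetric]
    by (simp add: divide_divide_eq_left sum_distrib_left)
  finally show ?thesis .
qed

lemma uu_nonneg: "uu d m y \<ge> 0"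
  unfolding uu_def by (intro divide_nonneg_nonneg sum_nonneg) (auto simp: KK_def)

lemma avg_const: "KK d > 0 \<Longrightarrow> (\<Sum>e\<in>unit_steps d. \<Sum>e'\<in>unit_steps d. c) / KK d ^ 2 = c"
  by (simp add: KK_def power2_eq_square)

lemma sum_swap3: "(\<Sum>e\<in>U. \<Sum>e'\<in>U. \<Sum>m\<in>M. g m e e') = (\<Sum>m\<in>M. \<Sum>e\<in>U. \<Sum>e'\<in>U. g m e e')"
proof -
  have "(\<Sum>e\<in>U. \<Sum>e'\<in>U. \<Sum>m\<in>M. g m e e') = (\<Sum>e\<in>U. \<Sum>m\<in>M. \<Sum>e'\<in>U. g m e e')"
    by (rule sum.cong[OF refl]) (rule sum.swap)
  also have "\<dots> = (\<Sum>m\<in>M. \<Sum>e\<in>U. \<Sum>e'\<in>U. g m e e')"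
    by (rule sum.swap)
  finally show ?thesis .
qed

lemma renewal:
  assumes K: "KK d > 0"
  shows "VV d b N y = 1 + (b - 1) * (\<Sum>m=1..N. uu d m y * VV d b (N - m) Z0)"
proof (induction N arbitrary: y)
  case 0
  then show ?case by simp
next
  case (Suc N)
  let ?U = "unit_steps d"
  define R where "R m = VV d b (N - m) Z0" for m
  have e1: "b ^ (if \<forall>i<d. sh y e e' i = 0 then 1 else 0) * VV d b N (sh y e e') =
      VV d b N (sh y e e') + (b - 1) * (uu d 0 (sh y e e') * VV d b N Z0)" for e e'
  proof (cases "\<forall>i<d. sh y e e' i = 0")
    case True
    then have "VV d b N (sh y e e') = VV d b N Z0" by (intro VV_cong) auto
    with True show ?thesis by (simp add: uu_0 algebra_simps)
  next
    case False
    then show ?thesis by (auto simp: uu_0)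
  qed
  have "VV d b (Suc N) y = (\<Sum>e\<in>?U. \<Sum>e'\<in>?U. VV d b N (sh y e e')) / KK d ^ 2
      + (b - 1) * ((\<Sum>e\<in>?U. \<Sum>e'\<in>?U. uu d 0 (sh y e e')) / KK d ^ 2) * VV d b N Z0"
  proof -
    have "(\<Sum>e\<in>?U. \<Sum>e'\<in>?U. (b - 1) * (uu d 0 (sh y e e') * VV d b N Z0)) =
        (b - 1) * (\<Sum>e\<in>?U. \<Sum>e'\<in>?U. uu d 0 (sh y e e')) * VV d b N Z0"
      by (simp add: sum_distrib_left sum_distrib_right ac_simps)
    then show ?thesis
      unfolding VV_Suc e1 sum.distrib add_divide_distrib by simp
  qed
  also have "(\<Sum>e\<in>?U. \<Sum>e'\<in>?U. uu d 0 (sh y e e')) / KK d ^ 2 = uu d 1 y"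
    using uu_Suc[of d 0 y] by simp
  also have "(\<Sum>e\<in>?U. \<Sum>e'\<in>?U. VV d b N (sh y e e')) =
      (\<Sum>e\<in>?U. \<Sum>e'\<in>?U. 1) + (b - 1) * (\<Sum>m=1..N. (\<Sum>e\<in>?U. \<Sum>e'\<in>?U. uu d m (sh y e e')) * R m)"
    unfolding Suc.IH R_def[symmetric]
    by (simp add: sum.distrib sum_distrib_left sum_distrib_right sum_swap3 algebra_simps)
  also have "\<dots> / KK d ^ 2 = 1 + (b - 1) * (\<Sum>m=1..N. uu d (Suc m) y * R m)"
    using K by (simp add: uu_Suc add_divide_distrib sum_divide_distrib avg_const[OF K]
       sum_distrib_left sum_distrib_right algebra_simps) (simp add: KK_def power2_eq_square)
  finally have "VV d b (Suc N) y = 1 + (b - 1) * (uu d 1 y * R 0 + (\<Sum>m=1..N. uu d (Suc m) y * R m))"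
    by (simp add: R_def algebra_simps)
  also have "uu d 1 y * R 0 + (\<Sum>m=1..N. uu d (Suc m) y * R m) =
      (\<Sum>m=1..Suc N. uu d m y * VV d b (Suc N - m) Z0)"
  proof -
    have "(\<Sum>m=1..Suc N. uu d m y * VV d b (Suc N - m) Z0) =
        uu d 1 y * VV d b N Z0 + (\<Sum>m=Suc 1..Suc N. uu d m y * VV d b (Suc N - m) Z0)"
      by (subst sum.atLeast_Suc_atMost) auto
    also have "(\<Sum>m=Suc 1..Suc N. uu d m y * VV d b (Suc N - m) Z0) = (\<Sum>m=1..N. uu d (Suc m) y * R m)"
      unfolding sum.shift_bounds_cl_Suc_ivl by (simp add: R_def)
    finally show ?thesis by (simp add: R_def)
  qed
  finally show ?case .
qed

lemma VV_bound:
  assumes K: "KK d > 0" and b: "b \<ge> 1"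
    and a: "(b - 1) * (\<Sum>m=1..N. uu d m Z0) < 1"
  shows "j \<le> N \<Longrightarrow> VV d b j Z0 \<le> 1 / (1 - (b - 1) * (\<Sum>m=1..N. uu d m Z0))"
proof (induction j rule: less_induct)
  case (less j)
  define a where "a = (b - 1) * (\<Sum>m=1..N. uu d m Z0)"
  have a1: "a < 1" using a by (simp add: a_def)
  define R where "R = 1 / (1 - a)"
  have R0: "R \<ge> 0" using a1 by (simp add: R_def)
  have "VV d b j Z0 = 1 + (b - 1) * (\<Sum>m=1..j. uu d m Z0 * VV d b (j - m) Z0)"
    by (rule renewal[OF K])
  also have "\<dots> \<le> 1 + (b - 1) * (\<Sum>m=1..j. uu d m Z0 * R)"
  proof -
    have "(\<Sum>m=1..j. uu d m Z0 * VV d b (j - m) Z0) \<le> (\<Sum>m=1..j. uu d m Z0 * R)"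
    proof (rule sum_mono)
      fix m assume m: "m \<in> {1..j}"
      have "VV d b (j - m) Z0 \<le> R" using less.IH[of "j - m"] m less.prems
        by (simp add: R_def a_def)
      then show "uu d m Z0 * VV d b (j - m) Z0 \<le> uu d m Z0 * R"
        by (intro mult_left_mono uu_nonneg)
    qed
    then show ?thesis using b by (intro add_left_mono mult_left_mono) auto
  qed
  also have "\<dots> \<le> 1 + (b - 1) * (\<Sum>m=1..N. uu d m Z0 * R)"
  proof -
    have "(\<Sum>m=1..j. uu d m Z0 * R) \<le> (\<Sum>m=1..N. uu d m Z0 * R)"
      using less.prems R0 by (intro sum_mono2) (auto intro: mult_nonneg_nonneg uu_nonneg)
    then show ?thesis using b by (intro add_left_mono mult_left_mono) auto
  qed
  also have "\<dots> = 1 + a * R"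
  proof -
    have "(\<Sum>m=1..N. uu d m Z0 * R) = (\<Sum>m=1..N. uu d m Z0) * R" by (simp add: sum_distrib_right)
    then show ?thesis by (simp add: a_def)
  qed
  also have "\<dots> = R" using a1 by (simp add: R_def field_simps)
  finally show ?case by (simp add: R_def a_def)
qed




lemma unit_steps_1: "unit_steps 1 = {[1], [-1]}"
proof -
  have "v \<in> unit_steps 1 \<longleftrightarrow> v = [1] \<or> v = [-1]" for v
  proof
    assume "v \<in> unit_steps 1"
    then obtain a where v: "v = [a]" and "\<bar>a\<bar> = 1"
      by (auto simp: unit_steps_def length_Suc_conv)
    then show "v = [1] \<or> v = [-1]" by (auto simp: abs_if split: if_splits)
  qed (auto simp: unit_steps_def)
  then show ?thesis by auto
qed

lemma unit_steps_2: "unit_steps 2 = {[1,0], [-1,0], [0,1], [0,-1]}"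
proof -
  have "v \<in> unit_steps 2 \<longleftrightarrow> v = [1,0] \<or> v = [-1,0] \<or> v = [0,1] \<or> v = [0,-1]" for v
  proof
    assume "v \<in> unit_steps 2"
    then obtain a b where v: "v = [a, b]" and ab: "\<bar>a\<bar> + \<bar>b\<bar> = 1"
      by (auto simp: unit_steps_def length_Suc_conv numeral_2_eq_2 lessThan_Suc)
    then have "(a = 1 \<and> b = 0) \<or> (a = -1 \<and> b = 0) \<or> (a = 0 \<and> b = 1) \<or> (a = 0 \<and> b = -1)"
      by arith
    then show "v = [1,0] \<or> v = [-1,0] \<or> v = [0,1] \<or> v = [0,-1]" using v by auto
  qed (auto simp: unit_steps_def numeral_2_eq_2 lessThan_Suc)
  then show ?thesis by auto
qed

lemma KK_1: "KK 1 = 2" unfolding KK_def unit_steps_1 by simp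
lemma KK_2: "KK 2 = 4" unfolding KK_def unit_steps_2 by simp

definition bi :: "nat \<Rightarrow> int \<Rightarrow> nat" where
  "bi n j = (if j < 0 then 0 else n choose nat j)"

lemma bi_Suc: "bi (Suc n) (j + 1) = bi n j + bi n (j + 1)"
proof (cases "j < 0")
  case True
  then show ?thesis
    by (cases "j = -1") (auto simp: bi_def)
next
  case False
  then have "nat (j + 1) = Suc (nat j)" by simp
  with False show ?thesis by (simp add: bi_def)
qed

definition gg :: "nat \<Rightarrow> int \<Rightarrow> real" where
  "gg m k = real (bi (2 * m) (int m + k)) / 4 ^ m"

lemma gg_Suc: "gg (Suc m) k = (gg m (k - 1) + 2 * gg m k + gg m (k + 1)) / 4"
proof -
  have "bi (2 * Suc m) (int (Suc m) + k) = bi (Suc (Suc (2*m))) ((int m + k) + 1)"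
    by (simp add: algebra_simps)
  also have "\<dots> = bi (Suc (2*m)) (int m + k) + bi (Suc (2*m)) ((int m + k) + 1)"
    by (rule bi_Suc)
  also have "bi (Suc (2*m)) (int m + k) = bi (Suc (2*m)) ((int m + (k - 1)) + 1)"
    by simp
  also have "\<dots> = bi (2*m) (int m + (k - 1)) + bi (2*m) (int m + k)"
    by (subst bi_Suc) simp
  also have "bi (Suc (2*m)) ((int m + k) + 1) = bi (2*m) (int m + k) + bi (2*m) (int m + (k + 1))"
    by (subst bi_Suc) (simp add: add.assoc)
  finally show ?thesis
    by (simp add: gg_def field_simps)
qed

lemma gg_0: "gg 0 k = (if k = 0 then 1 else 0)"
  by (auto simp: gg_def bi_def)

lemma gg_nonneg: "gg m k \<ge> 0" by (simp add: gg_def)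

lemma central_rec: "Suc m * (Suc (Suc (2*m)) choose Suc m) = 2 * Suc (2*m) * ((2*m) choose m)"
proof -
  have 1: "Suc m * (Suc (Suc (2*m)) choose Suc m) = Suc (Suc (2*m)) * (Suc (2*m) choose m)"
    by (rule Suc_times_binomial)
  have 2: "Suc m * (Suc (2*m) choose Suc m) = Suc (2*m) * ((2*m) choose m)"
    by (rule Suc_times_binomial)
  have 3: "(Suc (2*m) choose m) = (Suc (2*m) choose Suc m)"
    using binomial_symmetric[of m "Suc (2*m)"] by (simp add: Suc_diff_le)
  have 4: "Suc (Suc (2*m)) = 2 * Suc m" by simp
  have "Suc m * (Suc (Suc (2*m)) choose Suc m) = Suc (Suc (2*m)) * (Suc (2*m) choose m)"
    by (rule 1)
  also have "\<dots> = Suc (Suc (2*m)) * (Suc (2*m) choose Suc m)" by (simp only: 3)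
  also have "\<dots> = 2 * (Suc m * (Suc (2*m) choose Suc m))" by (simp only: 4 mult.assoc)
  also have "\<dots> = 2 * Suc (2*m) * ((2*m) choose m)" unfolding 2 by simp
  finally show ?thesis .
qed

lemma gg0_Suc: "gg (Suc m) 0 = gg m 0 * (2 * m + 1) / (2 * m + 2)"
proof -
  have "real (Suc m) * real (Suc (Suc (2*m)) choose Suc m) = 2 * real (Suc (2*m)) * real ((2*m) choose m)"
    using arg_cong[OF central_rec, of real] by (simp only: of_nat_mult of_nat_numeral)
  then have e: "real (Suc (Suc (2*m)) choose Suc m) = 2 * (2*m+1) * real ((2*m) choose m) / (m + 1)"
    by (simp add: field_simps del: binomial_Suc_Suc)
  have b1: "bi (2 * Suc m) (int (Suc m) + 0) = (Suc (Suc (2*m)) choose Suc m)"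
    by (simp only: bi_def) (simp del: binomial_Suc_Suc of_nat_Suc)
  have b0: "bi (2 * m) (int m + 0) = ((2*m) choose m)"
    by (simp add: bi_def)
  have p: "(4::real) ^ m > 0" by simp
  have "gg (Suc m) 0 = real (Suc (Suc (2*m)) choose Suc m) / 4 ^ Suc m"
    unfolding gg_def b1 ..
  also have "\<dots> = 2 * (2*m+1) * real ((2*m) choose m) / (m + 1) / 4 ^ Suc m"
    by (simp only: e)
  also have "\<dots> = gg m 0 * (2 * m + 1) / (2 * m + 2)"
    unfolding gg_def b0 using p by (simp add: divide_simps) (simp add: algebra_simps)
  finally show ?thesis .
qed

lemma gg0_sq: "gg m 0 ^ 2 \<le> 1 / (2 * m + 1)"
proof (induction m)
  case 0
  then show ?case by (simp add: gg_0)
next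
  case (Suc m)
  have "gg (Suc m) 0 ^ 2 = gg m 0 ^ 2 * ((2 * m + 1) / (2 * m + 2)) ^ 2"
    by (simp add: gg0_Suc power_mult_distrib power_divide)
  also have "\<dots> \<le> 1 / (2 * m + 1) * ((2 * m + 1) / (2 * m + 2)) ^ 2"
    using Suc.IH by (intro mult_right_mono) (simp_all add: add.commute)
  also have "\<dots> = (2 * m + 1) / (2 * m + 2) ^ 2"
  proof -
    have q: "4 + (real m * 8 + real m * (real m * 4)) \<noteq> 0"
      by (smt (verit) mult_nonneg_nonneg of_nat_0_le_iff)
    show ?thesis using q by (simp add: power2_eq_square divide_simps) (simp add: algebra_simps)
  qed
  also have "\<dots> \<le> 1 / (2 * Suc m + 1)"
    by (simp add: divide_simps power2_eq_square algebra_simps add_pos_nonneg)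
  finally show ?case by simp
qed




definition F1 :: "nat \<Rightarrow> int \<Rightarrow> real" where
  "F1 m a = (if even a then gg m (a div 2) else 0)"

lemma F1_Suc: "F1 (Suc m) a = (2 * F1 m a + F1 m (a + 2) + F1 m (a - 2)) / 4"
proof (cases "even a")
  case True
  then obtain k where a: "a = 2 * k" by blast
  have 1: "a + 2 = 2 * (k + 1)" and 2: "a - 2 = 2 * (k - 1)" using a by auto
  show ?thesis unfolding F1_def 1 2 using a by (simp add: gg_Suc algebra_simps)
next
  case False
  then show ?thesis by (simp add: F1_def)
qed

lemma F1_0: "F1 0 a = (if a = 0 then 1 else 0)"
  by (auto simp: F1_def gg_0)

lemma uu1: "uu 1 m y = F1 m (y 0)"
proof (induction m arbitrary: y)
  case 0
  show ?case by (simp add: uu_0 F1_0)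
next
  case (Suc m)
  show ?case
    unfolding uu_Suc unit_steps_1 KK_1 Suc.IH by (simp add: sh_def F1_Suc algebra_simps)
qed

lemma uu2: "uu 2 m y = F1 m (y 0 + y 1) * F1 m (y 0 - y 1)"
proof (induction m arbitrary: y)
  case 0
  have "(\<forall>i<2. y i = 0) \<longleftrightarrow> y 0 = 0 \<and> y 1 = 0" by (auto simp: less_2_cases_iff)
  then show ?case by (auto simp: uu_0 F1_0)
next
  case (Suc m)
  show ?case
    unfolding uu_Suc unit_steps_2 KK_2 Suc.IH by (simp add: sh_def F1_Suc algebra_simps)
qed

lemma uu1': "uu (Suc 0) m y = F1 m (y 0)" using uu1 by simp

lemma gg0_le_sqrt: "m \<ge> 1 \<Longrightarrow> gg m 0 \<le> 1 / sqrt (real m)"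
proof -
  assume m: "m \<ge> 1"
  have "gg m 0 ^ 2 \<le> 1 / (2 * m + 1)" using gg0_sq[of m] by (simp add: add.commute)
  also have "\<dots> \<le> 1 / real m" using m by (simp add: divide_simps)
  also have "\<dots> = (1 / sqrt (real m)) ^ 2" by (simp add: power_divide)
  finally show ?thesis
    by (rule power2_le_imp_le) simp
qed

lemma gg0_sq_le: "m \<ge> 1 \<Longrightarrow> gg m 0 ^ 2 \<le> 1 / real m"
proof -
  assume m: "m \<ge> 1"
  have "gg m 0 ^ 2 \<le> 1 / (2 * m + 1)" using gg0_sq[of m] by (simp add: add.commute)
  also have "\<dots> \<le> 1 / real m" using m by (simp add: divide_simps)
  finally show ?thesis .
qed

lemma sum_inv_sqrt: "(\<Sum>m=1..N. 1 / sqrt (real m)) \<le> 2 * sqrt (real N)"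
proof (induction N)
  case 0
  then show ?case by simp
next
  case (Suc N)
  define s where "s = sqrt (real N)"
  define t where "t = sqrt (real (Suc N))"
  have s0: "s \<ge> 0" and t0: "t > 0" by (auto simp: s_def t_def)
  have st: "t ^ 2 = s ^ 2 + 1" by (simp add: s_def t_def)
  have "1 / t \<le> 2 * t - 2 * s"
  proof -
    have "0 \<le> (t - s) ^ 2" by simp
    then have "2 * t * s \<le> t ^ 2 + s ^ 2" by (simp add: power2_eq_square algebra_simps)
    then have "1 \<le> (2 * t - 2 * s) * t" using st by (simp add: power2_eq_square algebra_simps)
    then show ?thesis using t0 by (simp add: divide_simps)
  qed
  then have "2 * s + 1 / t \<le> 2 * t" by simp
  then show ?case using Suc.IH by (simp add: s_def t_def)
qed

lemma sum_inv: "N \<ge> 1 \<Longrightarrow> (\<Sum>m=1..N. 1 / real m) \<le> 1 + ln (real N)"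
proof (induction N rule: dec_induct)
  case base
  then show ?case by simp
next
  case (step N)
  have N: "real N > 0" using step by simp
  have "ln (real N / real (Suc N)) \<le> real N / real (Suc N) - 1"
    using N by (intro ln_le_minus_one) simp
  also have "\<dots> = - 1 / real (Suc N)" by (simp add: field_simps)
  finally have "1 / real (Suc N) \<le> ln (real (Suc N)) - ln (real N)"
    using N by (simp add: ln_div)
  then show ?case using step.IH by simp
qed

definition Gs :: "nat \<Rightarrow> nat \<Rightarrow> real" where "Gs d N = (\<Sum>m=1..N. uu d m Z0)"

lemma Gs1: "Gs 1 N \<le> 2 * sqrt (real N)"
proof -
  have "Gs 1 N \<le> (\<Sum>m=1..N. 1 / sqrt (real m))"
    unfolding Gs_def by (intro sum_mono) (auto simp: uu1' F1_def intro: gg0_le_sqrt)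
  also have "\<dots> \<le> 2 * sqrt (real N)" by (rule sum_inv_sqrt)
  finally show ?thesis .
qed

lemma Gs2: "N \<ge> 1 \<Longrightarrow> Gs 2 N \<le> 1 + ln (real N)"
proof -
  assume N: "N \<ge> 1"
  have "Gs 2 N \<le> (\<Sum>m=1..N. 1 / real m)"
    unfolding Gs_def by (intro sum_mono) (auto simp: uu2 F1_def power2_eq_square[symmetric] intro: gg0_sq_le)
  also have "\<dots> \<le> 1 + ln (real N)" by (rule sum_inv[OF N])
  finally show ?thesis .
qed




definition Mk :: "nat \<Rightarrow> nat \<Rightarrow> (nat \<Rightarrow> int) \<Rightarrow> ((nat \<Rightarrow> int) \<Rightarrow> real) \<Rightarrow> real" where
  "Mk d N y g = (\<Sum>s\<in>walks d N. g (\<lambda>i. y i + P s N i)) / KK d ^ N"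

lemma Mk_0: "Mk d 0 y g = g y" by (simp add: Mk_def)

lemma Mk_Suc: "Mk d (Suc N) y g = (\<Sum>e\<in>unit_steps d. Mk d N (\<lambda>i. y i + e ! i) g) / KK d"
  unfolding Mk_def sum_walks_Suc
  by (simp add: sum_divide_distrib[symmetric] divide_divide_eq_left add.assoc mult.commute)

definition Qd :: "nat \<Rightarrow> (nat \<Rightarrow> int) \<Rightarrow> real" where
  "Qd d z = (\<Sum>i<d. real_of_int (z i) ^ 2)"

lemma Qd1: "Qd (Suc 0) z = real_of_int (z 0) ^ 2" by (simp add: Qd_def)
lemma Qd2: "Qd 2 z = real_of_int (z 0) ^ 2 + real_of_int (z 1) ^ 2"
  by (simp add: Qd_def numeral_2_eq_2)

lemma Qd_nonneg: "Qd d z \<ge> 0" by (simp add: Qd_def sum_nonneg)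

lemma M1: assumes "d \<in> {1,2}" shows "Mk d N y (Qd d) = Qd d y + N"
proof (induction N arbitrary: y)
  case 0
  then show ?case by (simp add: Mk_0)
next
  case (Suc N)
  show ?case
  proof (cases "d = 1")
    case True
    show ?thesis unfolding True Mk_Suc unit_steps_1 KK_1 Suc.IH[unfolded True]
      by (simp add: Qd1 power2_eq_square algebra_simps)
  next
    case False
    then have d: "d = 2" using assms by auto
    show ?thesis unfolding d Mk_Suc unit_steps_2 KK_2 Suc.IH[unfolded d]
      by (simp add: Qd2 power2_eq_square algebra_simps)
  qed
qed

lemma step_ineq1:
  fixes a K :: real assumes K: "K \<ge> 0"
  shows "(((a + 1) ^ 2 + K) ^ 2 + ((a - 1) ^ 2 + K) ^ 2) / 2 \<le> (a ^ 2 + K + 3) ^ 2"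
proof -
  have "(((a + 1) ^ 2 + K) ^ 2 + ((a - 1) ^ 2 + K) ^ 2) / 2 = (a^2 + 1 + K)^2 + 4 * a^2"
    by (simp add: power2_eq_square algebra_simps)
  also have "\<dots> \<le> (a^2 + 1 + K)^2 + 4 * (a^2 + 1 + K) + 4"
    using K by simp
  also have "\<dots> = (a ^ 2 + K + 3) ^ 2" by (simp add: power2_eq_square algebra_simps)
  finally show ?thesis .
qed

lemma step_ineq2:
  fixes a b K :: real assumes K: "K \<ge> 0"
  shows "(((a + 1)^2 + b^2 + K)^2 + ((a - 1)^2 + b^2 + K)^2 + (a^2 + (b + 1)^2 + K)^2
      + (a^2 + (b - 1)^2 + K)^2) / 4 \<le> (a^2 + b^2 + K + 3)^2"
proof -
  have "(((a + 1)^2 + b^2 + K)^2 + ((a - 1)^2 + b^2 + K)^2 + (a^2 + (b + 1)^2 + K)^2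
      + (a^2 + (b - 1)^2 + K)^2) / 4 = (a^2 + b^2 + 1 + K)^2 + 2 * (a^2 + b^2)"
    by (simp add: power2_eq_square algebra_simps)
  also have "\<dots> \<le> (a^2 + b^2 + 1 + K)^2 + 4 * (a^2 + b^2 + 1 + K) + 4"
    using K by simp
  also have "\<dots> = (a^2 + b^2 + K + 3) ^ 2" by (simp add: power2_eq_square algebra_simps)
  finally show ?thesis .
qed

lemma M2: assumes "d \<in> {1,2}" shows "Mk d N y (\<lambda>z. Qd d z ^ 2) \<le> (Qd d y + 3 * N) ^ 2"
proof (induction N arbitrary: y)
  case 0
  then show ?case by (simp add: Mk_0)
next
  case (Suc N)
  have K: "KK d > 0" using assms KK_1 KK_2 by auto
  have "Mk d (Suc N) y (\<lambda>z. Qd d z ^ 2) \<le>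
      (\<Sum>e\<in>unit_steps d. (Qd d (\<lambda>i. y i + e ! i) + 3 * N) ^ 2) / KK d"
    unfolding Mk_Suc using K by (intro divide_right_mono sum_mono Suc.IH) auto
  also have "\<dots> \<le> (Qd d y + 3 * Suc N) ^ 2"
  proof (cases "d = 1")
    case True
    show ?thesis unfolding True unit_steps_1 KK_1
      using step_ineq1[of "3 * real N" "real_of_int (y 0)"]
      by (simp add: Qd1 algebra_simps)
  next
    case False
    then have d: "d = 2" using assms by auto
    show ?thesis unfolding d unit_steps_2 KK_2
      using step_ineq2[of "3 * real N" "real_of_int (y 0)" "real_of_int (y 1)"]
      by (simp add: Qd2 algebra_simps)
  qed
  finally show ?case .
qed

lemma sqnorm_Qd: "sqnorm (walk_pos d s N) = Qd d (\<lambda>i. Z0 i + P s N i)"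
  by (simp add: sqnorm_walk_pos Qd_def)

lemma mom1: assumes "d \<in> {1,2}"
  shows "(\<Sum>s\<in>walks d N. sqnorm (walk_pos d s N)) / KK d ^ N = real N"
  using M1[OF assms, of N Z0] unfolding Mk_def sqnorm_Qd by (simp add: Qd_def)

lemma mom2: assumes "d \<in> {1,2}"
  shows "(\<Sum>s\<in>walks d N. sqnorm (walk_pos d s N) ^ 2) / KK d ^ N \<le> 9 * real N ^ 2"
  using M2[OF assms, of N Z0] unfolding Mk_def sqnorm_Qd by (simp add: Qd_def power_mult_distrib)

lemma KK_pos: "d \<in> {1,2} \<Longrightarrow> KK d > 0" using KK_1 KK_2 by auto

lemma VV_nonneg: "b \<ge> 0 \<Longrightarrow> VV d b N y \<ge> 0"
  unfolding VV_def by (intro divide_nonneg_nonneg sum_nonneg) (auto simp: KK_def)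

lemma VV_ge1: assumes "d \<in> {1,2}" "b \<ge> 1" shows "VV d b N y \<ge> 1"
proof -
  have "(b - 1) * (\<Sum>m=1..N. uu d m y * VV d b (N - m) Z0) \<ge> 0"
    using assms by (intro mult_nonneg_nonneg sum_nonneg uu_nonneg VV_nonneg) auto
  then show ?thesis using renewal[OF KK_pos[OF assms(1)], of b N y] by simp
qed

lemma Gs_nonneg: "Gs d N \<ge> 0" unfolding Gs_def by (intro sum_nonneg uu_nonneg)

lemma rho_limit:
  fixes c :: "nat \<Rightarrow> real"
  assumes d: "d \<in> {1, 2}"
    and c1: "d = 1 \<Longrightarrow> (\<lambda>N. (c N)\<^sup>2 * sqrt (real N)) \<longlonglongrightarrow> 0"
    and c2: "d = 2 \<Longrightarrow> (\<lambda>N. (c N)\<^sup>2 * ln (real N)) \<longlonglongrightarrow> 0"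
  shows "(\<lambda>N. VV d ((1 + (c N)\<^sup>2)\<^sup>2) N Z0 - 1) \<longlonglongrightarrow> 0"
proof -
  define a where "a N = ((1 + (c N)\<^sup>2)\<^sup>2 - 1) * Gs d N" for N
  have bm1: "(1 + (c N)\<^sup>2)\<^sup>2 - 1 = (c N)\<^sup>2 * (2 + (c N)\<^sup>2)" for N
    by (simp add: power2_eq_square algebra_simps)
  have a0: "a N \<ge> 0" for N unfolding a_def bm1 by (intro mult_nonneg_nonneg Gs_nonneg) auto
  have csq: "(\<lambda>N. (c N)\<^sup>2) \<longlonglongrightarrow> 0"
  proof (cases "d = 1")
    case True
    show ?thesis
    proof (rule tendsto_sandwich[OF _ _ tendsto_const c1[OF True]])
      show "\<forall>\<^sub>F N in sequentially. 0 \<le> (c N)\<^sup>2" by simp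
      show "\<forall>\<^sub>F N in sequentially. (c N)\<^sup>2 \<le> (c N)\<^sup>2 * sqrt (real N)"
        using eventually_ge_at_top[of 1]
        by eventually_elim (intro mult_le_cancel_left1[THEN iffD2]; simp)
    qed
  next
    case False
    then have d2: "d = 2" using d by auto
    show ?thesis
    proof (rule tendsto_sandwich[OF _ _ tendsto_const c2[OF d2]])
      show "\<forall>\<^sub>F N in sequentially. 0 \<le> (c N)\<^sup>2" by simp
      show "\<forall>\<^sub>F N in sequentially. (c N)\<^sup>2 \<le> (c N)\<^sup>2 * ln (real N)"
        using eventually_ge_at_top[of 3]
      proof eventually_elim
        case (elim N)
        have "exp 1 \<le> (3::real)" by (rule exp_le)
        also have "3 \<le> real N" using elim by simp
        finally have "1 \<le> ln (real N)"
          using ln_exp ln_le_cancel_iff[of "exp 1" "real N"] by (smt (verit) exp_gt_zero)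
        then show ?case by (intro mult_le_cancel_left1[THEN iffD2]) simp
      qed
    qed
  qed
  have alim: "a \<longlonglongrightarrow> 0"
  proof (cases "d = 1")
    case True
    have lim: "(\<lambda>N. 2 * (2 + (c N)\<^sup>2) * ((c N)\<^sup>2 * sqrt (real N))) \<longlonglongrightarrow> 0"
      using tendsto_mult[OF tendsto_mult[OF tendsto_const tendsto_add[OF tendsto_const csq]] c1[OF True], of 2 2] by simp
    show ?thesis
    proof (rule tendsto_sandwich[OF _ _ tendsto_const lim])
      show "\<forall>\<^sub>F N in sequentially. 0 \<le> a N" using a0 by simp
      have "a N \<le> 2 * (2 + (c N)\<^sup>2) * ((c N)\<^sup>2 * sqrt (real N))" for N
      proof -
        have "a N \<le> (c N)\<^sup>2 * (2 + (c N)\<^sup>2) * (2 * sqrt (real N))"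
          unfolding a_def bm1 using Gs1 True by (intro mult_left_mono) auto
        then show ?thesis
          by (simp add: algebra_simps)
      qed
      then show "\<forall>\<^sub>F N in sequentially. a N \<le> 2 * (2 + (c N)\<^sup>2) * ((c N)\<^sup>2 * sqrt (real N))"
        by simp
    qed
  next
    case False
    then have d2: "d = 2" using d by auto
    have lim: "(\<lambda>N. (2 + (c N)\<^sup>2) * ((c N)\<^sup>2 + (c N)\<^sup>2 * ln (real N))) \<longlonglongrightarrow> 0"
      using tendsto_mult[OF tendsto_add[OF tendsto_const csq] tendsto_add[OF csq c2[OF d2]], of 2] by simp
    show ?thesis
    proof (rule tendsto_sandwich[OF _ _ tendsto_const lim])
      show "\<forall>\<^sub>F N in sequentially. 0 \<le> a N" using a0 by simp
      show "\<forall>\<^sub>F N in sequentially. a N \<le> (2 + (c N)\<^sup>2) * ((c N)\<^sup>2 + (c N)\<^sup>2 * ln (real N))"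
        using eventually_ge_at_top[of 1]
      proof eventually_elim
        case (elim N)
        have "a N \<le> (c N)\<^sup>2 * (2 + (c N)\<^sup>2) * (1 + ln (real N))"
          unfolding a_def bm1 using Gs2[OF elim] d2 by (intro mult_left_mono) auto
        then show ?case by (simp add: algebra_simps)
      qed
    qed
  qed
  have lim2: "(\<lambda>N. 2 * a N) \<longlonglongrightarrow> 0" using tendsto_mult[OF tendsto_const alim, of 2] by simp
  have ev: "\<forall>\<^sub>F N in sequentially. a N < 1/2"
    using alim by (rule order_tendstoD) simp
  show ?thesis
  proof (rule tendsto_sandwich[OF _ _ tendsto_const lim2])
    show "\<forall>\<^sub>F N in sequentially. 0 \<le> VV d ((1 + (c N)\<^sup>2)\<^sup>2) N Z0 - 1"
      using VV_ge1[OF d] by (intro always_eventually allI) (simp add: one_le_power)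
    show "\<forall>\<^sub>F N in sequentially. VV d ((1 + (c N)\<^sup>2)\<^sup>2) N Z0 - 1 \<le> 2 * a N"
      using ev
    proof eventually_elim
      case (elim N)
      have b1: "(1 + (c N)\<^sup>2)\<^sup>2 \<ge> 1" by (simp add: one_le_power)
      have "VV d ((1 + (c N)\<^sup>2)\<^sup>2) N Z0 \<le> 1 / (1 - a N)"
        using VV_bound[OF KK_pos[OF d] b1, of N N] elim by (simp add: a_def Gs_def)
      also have "\<dots> \<le> 1 + 2 * a N"
        using elim a0[of N] by (simp add: divide_simps) (simp add: algebra_simps mult_left_le)
      finally show ?case by simp
    qed
  qed
qed




definition FF :: "nat \<Rightarrow> real \<Rightarrow> (nat \<Rightarrow> int list \<Rightarrow> 'q \<Rightarrow> real) \<Rightarrow> nat \<Rightarrow> int list list \<Rightarrow> 'q \<Rightarrow> real" where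
  "FF d c h N s q = (\<Prod>n=1..N. 1 + c * h n (walk_pos d s n) q)"

definition Yw :: "nat \<Rightarrow> real \<Rightarrow> (nat \<Rightarrow> int list \<Rightarrow> 'q \<Rightarrow> real) \<Rightarrow> nat \<Rightarrow> (int list list \<Rightarrow> real) \<Rightarrow> 'q \<Rightarrow> real" where
  "Yw d c h N w q = (\<Sum>s\<in>walks d N. w s * FF d c h N s q) / KK d ^ N"

lemma finite_box: "finite (box d N)"
proof (rule finite_subset)
  show "box d N \<subseteq> {xs. set xs \<subseteq> {-int N..int N} \<and> length xs = d}"
    by (auto simp: box_def lattice_def in_set_conv_nth abs_le_iff minus_le_iff)
  show "finite {xs. set xs \<subseteq> {-int N..int N} \<and> length xs = d}"
    by (rule finite_lists_length_eq) auto
qed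

lemma sum_box_delta:
  assumes "s \<in> walks d N"
  shows "(\<Sum>x\<in>box d N. if walk_pos d s N = x then f x else 0) = f (walk_pos d s N)"
  using walk_pos_box[OF assms] finite_box by (simp add: sum.delta)

lemma msd_formula:
  assumes K: "KK d = 2 * real d"
  shows "mean_sq_disp d c (\<lambda>n x. h n x q) N =
    Yw d c h N (\<lambda>s. sqnorm (walk_pos d s N)) q / Yw d c h N (\<lambda>_. 1) q"
proof -
  have p: "polymer_p d c (\<lambda>n x. h n x q) N x =
      (\<Sum>s\<in>walks d N. if walk_pos d s N = x then FF d c h N s q else 0) / KK d ^ N" for x
    unfolding polymer_p_def K FF_def by (intro arg_cong2[where f="(/)"] sum.cong) auto
  have Z: "partition_fn d c (\<lambda>n x. h n x q) N = Yw d c h N (\<lambda>_. 1) q"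
  proof -
    have "partition_fn d c (\<lambda>n x. h n x q) N =
        (\<Sum>s\<in>walks d N. \<Sum>x\<in>box d N. if walk_pos d s N = x then FF d c h N s q else 0) / KK d ^ N"
      unfolding partition_fn_def p sum_divide_distrib[symmetric] by (subst sum.swap) simp
    also have "\<dots> = Yw d c h N (\<lambda>_. 1) q"
      unfolding Yw_def by (simp add: sum_box_delta)
    finally show ?thesis .
  qed
  have A: "(\<Sum>x\<in>box d N. sqnorm x * polymer_p d c (\<lambda>n x. h n x q) N x) = Yw d c h N (\<lambda>s. sqnorm (walk_pos d s N)) q"
  proof -
    have e: "sqnorm x * (if walk_pos d s N = x then F else 0) = (if walk_pos d s N = x then sqnorm (walk_pos d s N) * F else 0)" for x s F
      by auto
    have "(\<Sum>x\<in>box d N. sqnorm x * polymer_p d c (\<lambda>n x. h n x q) N x) =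
        (\<Sum>s\<in>walks d N. \<Sum>x\<in>box d N. if walk_pos d s N = x then sqnorm (walk_pos d s N) * FF d c h N s q else 0) / KK d ^ N"
      unfolding p sum_divide_distrib[symmetric] times_divide_eq_right sum_distrib_left e
      by (subst sum.swap) simp
    also have "\<dots> = Yw d c h N (\<lambda>s. sqnorm (walk_pos d s N)) q"
      unfolding Yw_def by (simp add: sum_box_delta)
    finally show ?thesis .
  qed
  show ?thesis
    unfolding mean_sq_disp_def polymer_pN_def times_divide_eq_right sum_divide_distrib[symmetric] A Z ..
qed

locale polymer_env = prob_space Q for Q :: "'q measure" +
  fixes d :: nat and h :: "nat \<Rightarrow> int list \<Rightarrow> 'q \<Rightarrow> real"
  assumes h_meas: "\<And>n x. x \<in> lattice d \<Longrightarrow> h n x \<in> borel_measurable Q"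
    and h_indep: "indep_vars (\<lambda>_. borel) (\<lambda>(n, x). h n x) (UNIV \<times> lattice d)"
    and h_plus: "\<And>n x. x \<in> lattice d \<Longrightarrow> measure Q {q \<in> space Q. h n x q = 1} = 1 / 2"
    and h_minus: "\<And>n x. x \<in> lattice d \<Longrightarrow> measure Q {q \<in> space Q. h n x q = - 1} = 1 / 2"
begin

lemma sets_eq:
  assumes "x \<in> lattice d"
  shows "{q \<in> space Q. h n x q = a} \<in> sets Q"
  using h_meas[OF assms] by measurable

lemma h_AE:
  assumes x: "x \<in> lattice d"
  shows "AE q in Q. h n x q = 1 \<or> h n x q = -1"
proof -
  let ?A = "{q \<in> space Q. h n x q = 1}" and ?B = "{q \<in> space Q. h n x q = -1}"
  have "prob (?A \<union> ?B) = prob ?A + prob ?B"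
    by (intro finite_measure_Union sets_eq x) auto
  also have "\<dots> = 1" using h_plus[OF x, of n] h_minus[OF x, of n] by simp
  finally have "AE q in Q. q \<in> ?A \<union> ?B" by (rule AE_prob_1)
  then show ?thesis by eventually_elim auto
qed

lemma integral_pow:
  assumes x: "x \<in> lattice d"
  shows "integrable Q (\<lambda>q. (1 + c * h n x q) ^ k)"
    and "(\<integral>q. (1 + c * h n x q) ^ k \<partial>Q) = ((1 + c) ^ k + (1 - c) ^ k) / 2"
proof -
  let ?A = "{q \<in> space Q. h n x q = 1}" and ?B = "{q \<in> space Q. h n x q = -1}"
  define g where "g q = (1 + c) ^ k * indicator ?A q + (1 - c) ^ k * indicator ?B q" for q
  have gm: "g \<in> borel_measurable Q" unfolding g_def
    using sets_eq[OF x] by measurable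
  have fm: "(\<lambda>q. (1 + c * h n x q) ^ k) \<in> borel_measurable Q"
    using h_meas[OF x] by measurable
  have ae: "AE q in Q. (1 + c * h n x q) ^ k = g q"
    using h_AE[OF x] AE_space by eventually_elim (auto simp: g_def indicator_def)
  have i1: "integrable Q (indicator ?A :: 'q \<Rightarrow> real)"
    by (rule integrable_real_indicator[OF sets_eq[OF x]]) (simp add: less_top[symmetric])
  have i2: "integrable Q (indicator ?B :: 'q \<Rightarrow> real)"
    by (rule integrable_real_indicator[OF sets_eq[OF x]]) (simp add: less_top[symmetric])
  have gi: "integrable Q g" unfolding g_def
    using i1 i2 by simp
  show "integrable Q (\<lambda>q. (1 + c * h n x q) ^ k)"
    using integrable_cong_AE[OF fm gm ae] gi by simp
  have "(\<integral>q. (1 + c * h n x q) ^ k \<partial>Q) = (\<integral>q. g q \<partial>Q)"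
    by (rule integral_cong_AE[OF fm gm ae])
  also have "\<dots> = (1 + c) ^ k * prob ?A + (1 - c) ^ k * prob ?B"
  proof -
    have "?A \<inter> space Q = ?A" and "?B \<inter> space Q = ?B" by auto
    show ?thesis
      unfolding g_def using i1 i2 by (simp add: \<open>?A \<inter> space Q = ?A\<close> \<open>?B \<inter> space Q = ?B\<close>)
  qed
  also have "\<dots> = ((1 + c) ^ k + (1 - c) ^ k) / 2"
    by (simp only: h_plus[OF x] h_minus[OF x]) (simp add: field_simps)
  finally show "(\<integral>q. (1 + c * h n x q) ^ k \<partial>Q) = ((1 + c) ^ k + (1 - c) ^ k) / 2" .
qed

definition hh :: "nat \<times> int list \<Rightarrow> 'q \<Rightarrow> real" where
  "hh i = (case i of (n, x) \<Rightarrow> h n x)"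

lemma expect_prod:
  assumes J: "finite J" "J \<subseteq> UNIV \<times> lattice d"
  shows "integrable Q (\<lambda>q. \<Prod>i\<in>J. (1 + c * hh i q) ^ m i)"
    and "(\<integral>q. (\<Prod>i\<in>J. (1 + c * hh i q) ^ m i) \<partial>Q) = (\<Prod>i\<in>J. ((1 + c) ^ m i + (1 - c) ^ m i) / 2)"
proof -
  have ind: "indep_vars (\<lambda>_. borel) (\<lambda>i q. (\<lambda>y. (1 + c * y) ^ m i) ((\<lambda>(n, x). h n x) i q)) J"
    by (rule indep_vars_compose2[OF indep_vars_subset[OF h_indep J(2)]]) auto
  then have ind': "indep_vars (\<lambda>_. borel) (\<lambda>i q. (1 + c * hh i q) ^ m i) J"
    by (simp add: hh_def)
  have int: "integrable Q (\<lambda>q. (1 + c * hh i q) ^ m i)" if "i \<in> J" for i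
    using that J(2) integral_pow(1) by (auto simp: hh_def)
  show "integrable Q (\<lambda>q. \<Prod>i\<in>J. (1 + c * hh i q) ^ m i)"
    by (rule indep_vars_integrable[OF J(1) ind' int])
  have "(\<integral>q. (\<Prod>i\<in>J. (1 + c * hh i q) ^ m i) \<partial>Q) = (\<Prod>i\<in>J. \<integral>q. (1 + c * hh i q) ^ m i \<partial>Q)"
    by (rule indep_vars_lebesgue_integral[OF J(1) ind' int])
  also have "\<dots> = (\<Prod>i\<in>J. ((1 + c) ^ m i + (1 - c) ^ m i) / 2)"
    using J(2) by (intro prod.cong refl) (auto simp: hh_def integral_pow(2))
  finally show "(\<integral>q. (\<Prod>i\<in>J. (1 + c * hh i q) ^ m i) \<partial>Q) = (\<Prod>i\<in>J. ((1 + c) ^ m i + (1 - c) ^ m i) / 2)" .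
qed

end




definition SA :: "nat \<Rightarrow> nat \<Rightarrow> int list list \<Rightarrow> (nat \<times> int list) set" where
  "SA d N s = (\<lambda>n. (n, walk_pos d s n)) ` {1..N}"

lemma finite_SA: "finite (SA d N s)" by (simp add: SA_def)

lemma SA_sub: "SA d N s \<subseteq> UNIV \<times> lattice d" by (auto simp: SA_def walk_pos_lattice)

lemma card_SA_inter: "card (SA d N s \<inter> SA d N t) = Lc d N Z0 s t"
proof -
  have "SA d N s \<inter> SA d N t = (\<lambda>n. (n, walk_pos d s n)) ` {n\<in>{1..N}. walk_pos d s n = walk_pos d t n}"
    by (auto simp: SA_def)
  then have "card (SA d N s \<inter> SA d N t) = card {n\<in>{1..N}. walk_pos d s n = walk_pos d t n}"
    by (simp add: card_image inj_on_def)
  also have "\<dots> = Lc d N Z0 s t"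
    unfolding Lc_def by (simp add: sum.inter_filter[symmetric] meet_def walk_pos_eq)
  finally show ?thesis .
qed

context polymer_env
begin

lemma FF_meas: "FF d c h N s \<in> borel_measurable Q"
  unfolding FF_def
  by (intro borel_measurable_prod borel_measurable_add borel_measurable_const borel_measurable_times
      h_meas walk_pos_lattice)

lemma FF_SA: "FF d c h N s q = (\<Prod>i\<in>SA d N s. 1 + c * hh i q)"
  unfolding FF_def SA_def by (subst prod.reindex) (auto simp: inj_on_def hh_def)

lemma prod_pow_indic:
  assumes "finite J" "S \<subseteq> J"
  shows "(\<Prod>i\<in>J. g i ^ (if i \<in> S then 1 else 0)) = (\<Prod>i\<in>S. g i)"
proof -
  have "(\<Prod>i\<in>J. g i ^ (if i \<in> S then 1 else 0)) = (\<Prod>i\<in>J. if i \<in> S then g i else 1)"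
    by (intro prod.cong) auto
  also have "\<dots> = (\<Prod>i\<in>{i\<in>J. i \<in> S}. g i)"
    using assms by (simp add: prod.inter_filter)
  also have "{i\<in>J. i \<in> S} = S" using assms by auto
  finally show ?thesis .
qed

definition mm :: "nat \<Rightarrow> int list list \<Rightarrow> int list list \<Rightarrow> nat \<times> int list \<Rightarrow> nat" where
  "mm N s t i = (if i \<in> SA d N s then 1 else 0) + (if i \<in> SA d N t then 1 else 0)"

lemma FF_pair: "FF d c h N s q * FF d c h N t q = (\<Prod>i\<in>SA d N s \<union> SA d N t. (1 + c * hh i q) ^ mm N s t i)"
proof -
  let ?J = "SA d N s \<union> SA d N t"
  have "(\<Prod>i\<in>?J. (1 + c * hh i q) ^ mm N s t i) =
     (\<Prod>i\<in>?J. (1 + c * hh i q) ^ (if i \<in> SA d N s then 1 else 0)) *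
     (\<Prod>i\<in>?J. (1 + c * hh i q) ^ (if i \<in> SA d N t then 1 else 0))"
    unfolding mm_def power_add prod.distrib ..
  also have "\<dots> = FF d c h N s q * FF d c h N t q"
    unfolding FF_SA by (subst (1 2) prod_pow_indic) (auto simp: finite_SA)
  finally show ?thesis by simp
qed

lemma FF_pair_int:
  shows "integrable Q (\<lambda>q. FF d c h N s q * FF d c h N t q)"
    and "(\<integral>q. FF d c h N s q * FF d c h N t q \<partial>Q) = (1 + c\<^sup>2) ^ Lc d N Z0 s t"
proof -
  let ?J = "SA d N s \<union> SA d N t"
  have J: "finite ?J" "?J \<subseteq> UNIV \<times> lattice d" using finite_SA SA_sub by auto
  show "integrable Q (\<lambda>q. FF d c h N s q * FF d c h N t q)"
    unfolding FF_pair by (rule expect_prod(1)[OF J])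
  have "(\<integral>q. FF d c h N s q * FF d c h N t q \<partial>Q) =
      (\<Prod>i\<in>?J. ((1 + c) ^ mm N s t i + (1 - c) ^ mm N s t i) / 2)"
    unfolding FF_pair by (rule expect_prod(2)[OF J])
  also have "\<dots> = (\<Prod>i\<in>?J. if i \<in> SA d N s \<inter> SA d N t then 1 + c\<^sup>2 else 1)"
    by (intro prod.cong refl) (auto simp: mm_def power2_eq_square algebra_simps)
  also have "\<dots> = (\<Prod>i\<in>{i\<in>?J. i \<in> SA d N s \<inter> SA d N t}. 1 + c\<^sup>2)"
    using J by (intro prod.inter_filter[symmetric]) simp
  also have "{i\<in>?J. i \<in> SA d N s \<inter> SA d N t} = SA d N s \<inter> SA d N t" by auto
  also have "(\<Prod>i\<in>SA d N s \<inter> SA d N t. 1 + c\<^sup>2) = (1 + c\<^sup>2) ^ Lc d N Z0 s t"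
    by (simp add: card_SA_inter)
  finally show "(\<integral>q. FF d c h N s q * FF d c h N t q \<partial>Q) = (1 + c\<^sup>2) ^ Lc d N Z0 s t" .
qed

lemma FF_int:
  shows "integrable Q (FF d c h N s)"
    and "(\<integral>q. FF d c h N s q \<partial>Q) = 1"
proof -
  have J: "finite (SA d N s)" "SA d N s \<subseteq> UNIV \<times> lattice d" using finite_SA SA_sub by auto
  have e: "FF d c h N s = (\<lambda>q. \<Prod>i\<in>SA d N s. (1 + c * hh i q) ^ (\<lambda>_. 1::nat) i)"
    by (simp add: FF_SA fun_eq_iff)
  show "integrable Q (FF d c h N s)" unfolding e by (rule expect_prod(1)[OF J])
  show "(\<integral>q. FF d c h N s q \<partial>Q) = 1" unfolding e expect_prod(2)[OF J] by simp
qed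

end




lemma pair_bound:
  fixes w :: "int list list \<Rightarrow> real" and X :: "int list list \<Rightarrow> int list list \<Rightarrow> real"
  assumes K: "K > 0" and dl: "\<delta> > 0"
  shows "(\<Sum>s\<in>W. \<Sum>t\<in>W. w s * w t * X s t) / K\<^sup>2 \<le>
     (\<delta> * ((\<Sum>s\<in>W. (w s)\<^sup>2) / K)\<^sup>2 + ((\<Sum>s\<in>W. \<Sum>t\<in>W. (X s t)\<^sup>2) / K\<^sup>2) / \<delta>) / 2"
proof -
  have pt: "w s * w t * X s t \<le> (\<delta> * ((w s)\<^sup>2 * (w t)\<^sup>2) + (X s t)\<^sup>2 / \<delta>) / 2" for s t
  proof -
    have "0 \<le> (\<delta> * (w s * w t) - X s t)\<^sup>2 / \<delta>" using dl by simp
    also have "(\<delta> * (w s * w t) - X s t)\<^sup>2 / \<delta> = \<delta> * ((w s)\<^sup>2 * (w t)\<^sup>2) + (X s t)\<^sup>2 / \<delta> - 2 * (w s * w t * X s t)"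
      using dl by (simp add: power2_eq_square field_simps)
    finally show ?thesis by simp
  qed
  have "(\<Sum>s\<in>W. \<Sum>t\<in>W. w s * w t * X s t) \<le> (\<Sum>s\<in>W. \<Sum>t\<in>W. (\<delta> * ((w s)\<^sup>2 * (w t)\<^sup>2) + (X s t)\<^sup>2 / \<delta>) / 2)"
    by (intro sum_mono pt)
  also have "\<dots> = (\<delta> * ((\<Sum>s\<in>W. (w s)\<^sup>2) * (\<Sum>s\<in>W. (w s)\<^sup>2)) + (\<Sum>s\<in>W. \<Sum>t\<in>W. (X s t)\<^sup>2) / \<delta>) / 2"
    by (simp add: sum.distrib sum_divide_distrib[symmetric] sum_distrib_left[symmetric] sum_product add_divide_distrib)
  finally have "(\<Sum>s\<in>W. \<Sum>t\<in>W. w s * w t * X s t) \<le>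
      (\<delta> * ((\<Sum>s\<in>W. (w s)\<^sup>2) * (\<Sum>s\<in>W. (w s)\<^sup>2)) + (\<Sum>s\<in>W. \<Sum>t\<in>W. (X s t)\<^sup>2) / \<delta>) / 2" .
  then have "(\<Sum>s\<in>W. \<Sum>t\<in>W. w s * w t * X s t) / K\<^sup>2 \<le>
      (\<delta> * ((\<Sum>s\<in>W. (w s)\<^sup>2) * (\<Sum>s\<in>W. (w s)\<^sup>2)) + (\<Sum>s\<in>W. \<Sum>t\<in>W. (X s t)\<^sup>2) / \<delta>) / 2 / K\<^sup>2"
    using K by (intro divide_right_mono) auto
  also have "\<dots> = (\<delta> * ((\<Sum>s\<in>W. (w s)\<^sup>2) / K)\<^sup>2 + ((\<Sum>s\<in>W. \<Sum>t\<in>W. (X s t)\<^sup>2) / K\<^sup>2) / \<delta>) / 2"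
    using K dl by (simp add: power2_eq_square field_simps)
  finally show ?thesis .
qed

lemma X_sq_bound:
  fixes c :: real
  shows "((1 + c\<^sup>2) ^ L - 1)\<^sup>2 \<le> ((1 + c\<^sup>2)\<^sup>2) ^ L - 1"
proof -
  have a: "(1 + c\<^sup>2) ^ L \<ge> 1" by (simp add: one_le_power)
  have "((1 + c\<^sup>2)\<^sup>2) ^ L = ((1 + c\<^sup>2) ^ L)\<^sup>2" by (simp add: power_mult[symmetric] mult.commute)
  then show ?thesis using a by (simp add: power2_eq_square algebra_simps)
qed

lemma XX_bound:
  assumes K: "KK d > 0"
  shows "(\<Sum>s\<in>walks d N. \<Sum>t\<in>walks d N. ((1 + c\<^sup>2) ^ Lc d N Z0 s t - 1)\<^sup>2) / (KK d ^ N)\<^sup>2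
     \<le> VV d ((1 + c\<^sup>2)\<^sup>2) N Z0 - 1"
proof -
  have "(\<Sum>s\<in>walks d N. \<Sum>t\<in>walks d N. ((1 + c\<^sup>2) ^ Lc d N Z0 s t - 1)\<^sup>2)
     \<le> (\<Sum>s\<in>walks d N. \<Sum>t\<in>walks d N. ((1 + c\<^sup>2)\<^sup>2) ^ Lc d N Z0 s t - 1)"
    by (intro sum_mono X_sq_bound)
  also have "\<dots> = (\<Sum>s\<in>walks d N. \<Sum>t\<in>walks d N. ((1 + c\<^sup>2)\<^sup>2) ^ Lc d N Z0 s t) - (KK d ^ N)\<^sup>2"
    by (simp add: sum_subtractf card_walks KK_def power2_eq_square)
  finally have le: "(\<Sum>s\<in>walks d N. \<Sum>t\<in>walks d N. ((1 + c\<^sup>2) ^ Lc d N Z0 s t - 1)\<^sup>2)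
     \<le> (\<Sum>s\<in>walks d N. \<Sum>t\<in>walks d N. ((1 + c\<^sup>2)\<^sup>2) ^ Lc d N Z0 s t) - (KK d ^ N)\<^sup>2" .
  have K2: "(KK d ^ N)\<^sup>2 > 0" using K by simp
  have "(\<Sum>s\<in>walks d N. \<Sum>t\<in>walks d N. ((1 + c\<^sup>2) ^ Lc d N Z0 s t - 1)\<^sup>2) / (KK d ^ N)\<^sup>2
     \<le> ((\<Sum>s\<in>walks d N. \<Sum>t\<in>walks d N. ((1 + c\<^sup>2)\<^sup>2) ^ Lc d N Z0 s t) - (KK d ^ N)\<^sup>2) / (KK d ^ N)\<^sup>2"
    using K2 le by (intro divide_right_mono) auto
  also have "\<dots> = (\<Sum>s\<in>walks d N. \<Sum>t\<in>walks d N. ((1 + c\<^sup>2)\<^sup>2) ^ Lc d N Z0 s t) / (KK d ^ N)\<^sup>2 - 1"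
    using K2 by (simp add: diff_divide_distrib)
  finally have f: "(\<Sum>s\<in>walks d N. \<Sum>t\<in>walks d N. ((1 + c\<^sup>2) ^ Lc d N Z0 s t - 1)\<^sup>2) / (KK d ^ N)\<^sup>2
     \<le> (\<Sum>s\<in>walks d N. \<Sum>t\<in>walks d N. ((1 + c\<^sup>2)\<^sup>2) ^ Lc d N Z0 s t) / (KK d ^ N)\<^sup>2 - 1" .
  have e: "(KK d ^ N)\<^sup>2 = KK d ^ (2 * N)" by (simp add: power_mult[symmetric] mult.commute)
  show ?thesis using f unfolding e by (simp add: VV_def)
qed

lemma E_limit:
  fixes E \<rho> :: "nat \<Rightarrow> real"
  assumes E0: "\<And>N. 0 \<le> E N"
    and bd: "\<forall>\<^sub>F N in sequentially. \<forall>\<delta>>0. E N \<le> (\<delta> * C + \<rho> N / \<delta>) / 2"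
    and C: "C > 0" and rho: "\<rho> \<longlonglongrightarrow> 0"
  shows "E \<longlonglongrightarrow> 0"
proof (rule order_tendstoI)
  fix a :: real assume "a < 0"
  then show "\<forall>\<^sub>F N in sequentially. a < E N" using E0 by (intro always_eventually) (auto intro: less_le_trans)
next
  fix a :: real assume a: "0 < a"
  have "\<forall>\<^sub>F N in sequentially. \<rho> N < a\<^sup>2 / C"
    using rho by (rule order_tendstoD) (use a C in simp)
  then show "\<forall>\<^sub>F N in sequentially. E N < a"
    using bd
  proof eventually_elim
    case (elim N)
    have dl: "a / C > 0" using a C by simp
    have "E N \<le> (a / C * C + \<rho> N / (a / C)) / 2" using elim(2) dl by blast
    also have "\<rho> N / (a / C) = \<rho> N * C / a" by simp
    also have "\<rho> N * C / a < a"
      using elim(1) a C by (simp add: divide_simps power2_eq_square mult.commute)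
    finally show ?case using C by simp
  qed
qed

lemma ratio_close:
  fixes y1 y2 \<delta> :: real
  assumes "\<bar>y1 - 1\<bar> < \<delta>" "\<bar>y2 - 1\<bar> < \<delta>" "\<delta> \<le> 1/2"
  shows "\<bar>y2 / y1 - 1\<bar> \<le> 4 * \<delta>"
proof -
  have y1: "y1 > 1/2" using assms by auto
  have "y2 / y1 - 1 = (y2 - y1) / y1" using y1 by (simp add: field_simps)
  then have "\<bar>y2 / y1 - 1\<bar> = \<bar>y2 - y1\<bar> / y1" using y1 by simp
  also have "\<dots> \<le> (2 * \<delta>) / (1/2)"
    using assms y1 by (intro frac_le) auto
  finally show ?thesis by simp
qed

context polymer_env
begin

lemma Yw_meas: "Yw d c h N w \<in> borel_measurable Q"
  unfolding Yw_def using FF_meas by measurable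

lemma Yw_sq:
  assumes K: "KK d > 0"
  shows "integrable Q (\<lambda>q. (Yw d c h N w q - 1)\<^sup>2)"
    and "(\<integral>q. (Yw d c h N w q - 1)\<^sup>2 \<partial>Q) =
      (\<Sum>s\<in>walks d N. \<Sum>t\<in>walks d N. w s * w t * ((1 + c\<^sup>2) ^ Lc d N Z0 s t - 1)) / (KK d ^ N)\<^sup>2
      + ((\<Sum>s\<in>walks d N. w s) / KK d ^ N - 1)\<^sup>2"
proof -
  let ?W = "walks d N" and ?K = "KK d ^ N"
  have K0: "?K > 0" using K by simp
  define G where "G q = (\<Sum>s\<in>?W. \<Sum>t\<in>?W. (w s * w t / ?K\<^sup>2) * (FF d c h N s q * FF d c h N t q))
      + (\<Sum>s\<in>?W. (- 2 * w s / ?K) * FF d c h N s q) + 1" for q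
  have eq: "(Yw d c h N w q - 1)\<^sup>2 = G q" for q
  proof -
    let ?a = "\<Sum>s\<in>?W. w s * FF d c h N s q"
    have sq: "?a\<^sup>2 = (\<Sum>s\<in>?W. \<Sum>t\<in>?W. w s * w t * (FF d c h N s q * FF d c h N t q))"
      by (simp add: power2_eq_square sum_product algebra_simps)
    have "(Yw d c h N w q - 1)\<^sup>2 = ?a\<^sup>2 / ?K\<^sup>2 - 2 * ?a / ?K + 1"
      unfolding Yw_def power2_diff power_divide by simp
    also have "\<dots> = G q"
      unfolding G_def sq using K0
      by (simp add: sum_divide_distrib sum_distrib_left sum_distrib_right mult.assoc sum_negf)
    finally show ?thesis .
  qed
  have Gi: "integrable Q G"
    unfolding G_def
    by (intro Bochner_Integration.integrable_add Bochner_Integration.integrable_sum integrable_mult_right FF_pair_int(1) FF_int(1)) simp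
  show "integrable Q (\<lambda>q. (Yw d c h N w q - 1)\<^sup>2)"
    unfolding eq using Gi by (simp add: fun_eq_iff[symmetric] eq) 
  have "(\<integral>q. (Yw d c h N w q - 1)\<^sup>2 \<partial>Q) = (\<integral>q. G q \<partial>Q)" unfolding eq ..
  also have "\<dots> = (\<Sum>s\<in>?W. \<Sum>t\<in>?W. (w s * w t / ?K\<^sup>2) * (1 + c\<^sup>2) ^ Lc d N Z0 s t)
      + (\<Sum>s\<in>?W. (- 2 * w s / ?K)) + 1"
    unfolding G_def using FF_pair_int FF_int
    by (simp add: integral_add integrable_sum integral_sum integrable_mult_right prob_space)
  also have "\<dots> = (\<Sum>s\<in>?W. \<Sum>t\<in>?W. w s * w t * ((1 + c\<^sup>2) ^ Lc d N Z0 s t - 1)) / ?K\<^sup>2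
      + ((\<Sum>s\<in>?W. w s) / ?K - 1)\<^sup>2"
  proof -
    have 1: "(\<Sum>s\<in>?W. \<Sum>t\<in>?W. (w s * w t / ?K\<^sup>2) * (1 + c\<^sup>2) ^ Lc d N Z0 s t) =
       (\<Sum>s\<in>?W. \<Sum>t\<in>?W. w s * w t * ((1 + c\<^sup>2) ^ Lc d N Z0 s t - 1)) / ?K\<^sup>2
       + (\<Sum>s\<in>?W. w s)\<^sup>2 / ?K\<^sup>2"
      by (simp add: power2_eq_square sum_product sum_divide_distrib[symmetric] sum.distrib[symmetric]
          add_divide_distrib[symmetric] algebra_simps)
    have 2: "(\<Sum>s\<in>?W. (- 2 * w s / ?K)) = - 2 * (\<Sum>s\<in>?W. w s) / ?K"
      by (simp add: sum_divide_distrib[symmetric] sum_distrib_left[symmetric] sum_negf)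
    show ?thesis unfolding 1 2 power2_diff power_divide by simp
  qed
  finally show "(\<integral>q. (Yw d c h N w q - 1)\<^sup>2 \<partial>Q) =
      (\<Sum>s\<in>walks d N. \<Sum>t\<in>walks d N. w s * w t * ((1 + c\<^sup>2) ^ Lc d N Z0 s t - 1)) / (KK d ^ N)\<^sup>2
      + ((\<Sum>s\<in>walks d N. w s) / KK d ^ N - 1)\<^sup>2" .
qed

lemma cheb:
  assumes K: "KK d > 0" and dl: "\<delta> > 0"
  shows "measure Q {q \<in> space Q. \<delta> \<le> \<bar>Yw d c h N w q - 1\<bar>} \<le> (\<integral>q. (Yw d c h N w q - 1)\<^sup>2 \<partial>Q) / \<delta>\<^sup>2"
  using second_moment_method[of "\<lambda>q. Yw d c h N w q - 1" \<delta>] Yw_meas Yw_sq(1)[OF K] dl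
  by simp

end




lemma Yw_scale: "Yw d c h N (\<lambda>s. w s / a) q = Yw d c h N w q / a"
  unfolding Yw_def by (simp add: sum_divide_distrib[symmetric])

context polymer_env
begin

lemma E_bound:
  assumes K: "KK d > 0" and dl: "\<delta> > 0"
    and w1: "(\<Sum>s\<in>walks d N. w s) / KK d ^ N = 1"
    and w2: "(\<Sum>s\<in>walks d N. (w s)\<^sup>2) / KK d ^ N \<le> 9"
  shows "(\<integral>q. (Yw d c h N w q - 1)\<^sup>2 \<partial>Q) \<le> (\<delta> * 81 + (VV d ((1 + c\<^sup>2)\<^sup>2) N Z0 - 1) / \<delta>) / 2"
proof -
  have K0: "KK d ^ N > 0" using K by simp
  have B0: "(\<Sum>s\<in>walks d N. (w s)\<^sup>2) / KK d ^ N \<ge> 0"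
    using K0 by (intro divide_nonneg_nonneg sum_nonneg) auto
  have B: "((\<Sum>s\<in>walks d N. (w s)\<^sup>2) / KK d ^ N)\<^sup>2 \<le> 81"
    using power_mono[OF w2 B0, of 2] by simp
  have "(\<integral>q. (Yw d c h N w q - 1)\<^sup>2 \<partial>Q) =
      (\<Sum>s\<in>walks d N. \<Sum>t\<in>walks d N. w s * w t * ((1 + c\<^sup>2) ^ Lc d N Z0 s t - 1)) / (KK d ^ N)\<^sup>2"
    using Yw_sq(2)[OF K, where c=c and N=N and w=w] w1 by simp
  also have "\<dots> \<le> (\<delta> * ((\<Sum>s\<in>walks d N. (w s)\<^sup>2) / KK d ^ N)\<^sup>2 +
      ((\<Sum>s\<in>walks d N. \<Sum>t\<in>walks d N. ((1 + c\<^sup>2) ^ Lc d N Z0 s t - 1)\<^sup>2) / (KK d ^ N)\<^sup>2) / \<delta>) / 2"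
    by (rule pair_bound[OF K0 dl])
  also have "\<dots> \<le> (\<delta> * 81 + (VV d ((1 + c\<^sup>2)\<^sup>2) N Z0 - 1) / \<delta>) / 2"
    using B XX_bound[OF K, where N=N and c=c] dl
    by (intro divide_right_mono add_mono mult_left_mono) auto
  finally show ?thesis .
qed

theorem main:
  fixes c :: "nat \<Rightarrow> real"
  assumes d: "d \<in> {1, 2}"
    and c1: "d = 1 \<Longrightarrow> (\<lambda>N. (c N)\<^sup>2 * sqrt (real N)) \<longlonglongrightarrow> 0"
    and c2: "d = 2 \<Longrightarrow> (\<lambda>N. (c N)\<^sup>2 * ln (real N)) \<longlonglongrightarrow> 0"
  shows "\<forall>\<epsilon>>0. (\<lambda>N. measure Q {q \<in> space Q.
            \<bar>mean_sq_disp d (c N) (\<lambda>n x. h n x q) N / real N - 1\<bar> > \<epsilon>}) \<longlonglongrightarrow> 0"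
proof (intro allI impI)
  fix \<epsilon> :: real assume eps: "\<epsilon> > 0"
  have K: "KK d > 0" using d by (rule KK_pos)
  have K2: "KK d = 2 * real d" using d KK_1 KK_2 by auto
  define \<delta>0 where "\<delta>0 = min (1/2) (\<epsilon> / 8)"
  have d0: "\<delta>0 > 0" "\<delta>0 \<le> 1/2" "4 * \<delta>0 < \<epsilon>" using eps by (auto simp: \<delta>0_def)
  define r where "r N s = sqnorm (walk_pos d s N)" for N s
  define Y1 where "Y1 N = Yw d (c N) h N (\<lambda>_. 1)" for N
  define Y2 where "Y2 N = Yw d (c N) h N (\<lambda>s. r N s / real N)" for N
  define E1 where "E1 N = (\<integral>q. (Y1 N q - 1)\<^sup>2 \<partial>Q)" for N
  define E2 where "E2 N = (\<integral>q. (Y2 N q - 1)\<^sup>2 \<partial>Q)" for N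
  define \<rho> where "\<rho> N = VV d ((1 + (c N)\<^sup>2)\<^sup>2) N Z0 - 1" for N
  have rho: "\<rho> \<longlonglongrightarrow> 0" unfolding \<rho>_def by (rule rho_limit[OF d c1 c2])
  have cardW: "real (card (walks d N)) = KK d ^ N" for N
    by (simp add: card_walks KK_def)
  have E1lim: "E1 \<longlonglongrightarrow> 0"
  proof (rule E_limit[where C=81 and \<rho>=\<rho>])
    show "0 \<le> E1 N" for N unfolding E1_def by (rule integral_nonneg_AE) simp
    show "\<forall>\<^sub>F N in sequentially. \<forall>\<delta>>0. E1 N \<le> (\<delta> * 81 + \<rho> N / \<delta>) / 2"
    proof (intro always_eventually allI impI)
      fix N and \<delta> :: real assume dl: "\<delta> > 0"
      have w1: "(\<Sum>s\<in>walks d N. (\<lambda>_. 1::real) s) / KK d ^ N = 1" using K cardW[of N] by simp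
      have w2: "(\<Sum>s\<in>walks d N. ((\<lambda>_. 1::real) s)\<^sup>2) / KK d ^ N \<le> 9" using K cardW[of N] by simp
      show "E1 N \<le> (\<delta> * 81 + \<rho> N / \<delta>) / 2"
        unfolding E1_def Y1_def \<rho>_def by (rule E_bound[OF K dl w1 w2])
    qed
  qed (use rho in auto)
  have E2lim: "E2 \<longlonglongrightarrow> 0"
  proof (rule E_limit[where C=81 and \<rho>=\<rho>])
    show "0 \<le> E2 N" for N unfolding E2_def by (rule integral_nonneg_AE) simp
    show "\<forall>\<^sub>F N in sequentially. \<forall>\<delta>>0. E2 N \<le> (\<delta> * 81 + \<rho> N / \<delta>) / 2"
      using eventually_ge_at_top[of 1]
    proof eventually_elim
      case (elim N)
      have N: "real N > 0" using elim by simp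
      show ?case
      proof (intro allI impI)
        fix \<delta> :: real assume dl: "\<delta> > 0"
        have "(\<Sum>s\<in>walks d N. r N s / real N) / KK d ^ N = ((\<Sum>s\<in>walks d N. r N s) / KK d ^ N) / real N"
          by (simp add: sum_divide_distrib[symmetric])
        also have "\<dots> = real N / real N"
          using mom1[OF d, of N] unfolding r_def by simp
        also have "real N / real N = 1" using N by simp
        finally have w1: "(\<Sum>s\<in>walks d N. r N s / real N) / KK d ^ N = 1" .
        have "(\<Sum>s\<in>walks d N. (r N s / real N)\<^sup>2) / KK d ^ N =
            ((\<Sum>s\<in>walks d N. (r N s)\<^sup>2) / KK d ^ N) / (real N)\<^sup>2"
          by (simp add: power_divide sum_divide_distrib[symmetric])
        also have "\<dots> \<le> 9 * (real N)\<^sup>2 / (real N)\<^sup>2"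
          using mom2[OF d, of N] N unfolding r_def by (intro divide_right_mono) auto
        also have "\<dots> = 9" using N by simp
        finally have w2: "(\<Sum>s\<in>walks d N. (r N s / real N)\<^sup>2) / KK d ^ N \<le> 9" .
        show "E2 N \<le> (\<delta> * 81 + \<rho> N / \<delta>) / 2"
          unfolding E2_def Y2_def \<rho>_def by (rule E_bound[OF K dl w1 w2])
      qed
    qed
  qed (use rho in auto)
  define S1 where "S1 N = {q \<in> space Q. \<delta>0 \<le> \<bar>Y1 N q - 1\<bar>}" for N
  define S2 where "S2 N = {q \<in> space Q. \<delta>0 \<le> \<bar>Y2 N q - 1\<bar>}" for N
  have S1m: "S1 N \<in> sets Q" for N unfolding S1_def Y1_def using Yw_meas by measurable
  have S2m: "S2 N \<in> sets Q" for N unfolding S2_def Y2_def using Yw_meas by measurable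
  have lim: "(\<lambda>N. E1 N / \<delta>0\<^sup>2 + E2 N / \<delta>0\<^sup>2) \<longlonglongrightarrow> 0"
    using tendsto_add[OF tendsto_divide[OF E1lim tendsto_const] tendsto_divide[OF E2lim tendsto_const], of "\<delta>0\<^sup>2" "\<delta>0\<^sup>2"] d0
    by simp
  show "(\<lambda>N. measure Q {q \<in> space Q.
            \<bar>mean_sq_disp d (c N) (\<lambda>n x. h n x q) N / real N - 1\<bar> > \<epsilon>}) \<longlonglongrightarrow> 0"
  proof (rule tendsto_sandwich[OF _ _ tendsto_const lim])
    show "\<forall>\<^sub>F N in sequentially. 0 \<le> measure Q {q \<in> space Q.
            \<bar>mean_sq_disp d (c N) (\<lambda>n x. h n x q) N / real N - 1\<bar> > \<epsilon>}" by simp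
    show "\<forall>\<^sub>F N in sequentially. measure Q {q \<in> space Q.
            \<bar>mean_sq_disp d (c N) (\<lambda>n x. h n x q) N / real N - 1\<bar> > \<epsilon>} \<le> E1 N / \<delta>0\<^sup>2 + E2 N / \<delta>0\<^sup>2"
      using eventually_ge_at_top[of 1]
    proof eventually_elim
      case (elim N)
      have N: "real N > 0" using elim by simp
      have sub: "{q \<in> space Q. \<bar>mean_sq_disp d (c N) (\<lambda>n x. h n x q) N / real N - 1\<bar> > \<epsilon>} \<subseteq> S1 N \<union> S2 N"
      proof
        fix q assume q: "q \<in> {q \<in> space Q. \<bar>mean_sq_disp d (c N) (\<lambda>n x. h n x q) N / real N - 1\<bar> > \<epsilon>}"
        have eq: "mean_sq_disp d (c N) (\<lambda>n x. h n x q) N / real N = Y2 N q / Y1 N q"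
          unfolding msd_formula[OF K2] Y1_def Y2_def Yw_scale r_def by simp
        show "q \<in> S1 N \<union> S2 N"
        proof (rule ccontr)
          assume "q \<notin> S1 N \<union> S2 N"
          then have "\<bar>Y1 N q - 1\<bar> < \<delta>0" "\<bar>Y2 N q - 1\<bar> < \<delta>0" using q by (auto simp: S1_def S2_def)
          then have "\<bar>Y2 N q / Y1 N q - 1\<bar> \<le> 4 * \<delta>0" using d0 by (intro ratio_close) auto
          then show False using q d0 eq by auto
        qed
      qed
      have "measure Q {q \<in> space Q. \<bar>mean_sq_disp d (c N) (\<lambda>n x. h n x q) N / real N - 1\<bar> > \<epsilon>}
          \<le> measure Q (S1 N \<union> S2 N)"
        using sub S1m S2m by (intro finite_measure_mono) auto
      also have "\<dots> \<le> measure Q (S1 N) + measure Q (S2 N)"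
        using S1m S2m by (rule measure_Un_le)
      also have "measure Q (S1 N) \<le> E1 N / \<delta>0\<^sup>2"
        unfolding S1_def E1_def Y1_def by (rule cheb[OF K d0(1)])
      also have "measure Q (S2 N) \<le> E2 N / \<delta>0\<^sup>2"
        unfolding S2_def E2_def Y2_def by (rule cheb[OF K d0(1)])
      finally show ?case by simp
    qed
  qed
qed

end

theorem theorem1:
  fixes d :: nat and c :: "nat \<Rightarrow> real"
    and Q :: "'q measure" and h :: "nat \<Rightarrow> int list \<Rightarrow> 'q \<Rightarrow> real"
  assumes d: "d \<in> {1, 2}"
    and c_pos: "\<And>N. c N > 0"
    and c1: "d = 1 \<Longrightarrow> (\<lambda>N. (c N)\<^sup>2 * sqrt (real N)) \<longlonglongrightarrow> 0"
    and c2: "d = 2 \<Longrightarrow> (\<lambda>N. (c N)\<^sup>2 * ln (real N)) \<longlonglongrightarrow> 0"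
    and Q: "prob_space Q"
    and h_meas: "\<And>n x. x \<in> lattice d \<Longrightarrow> h n x \<in> borel_measurable Q"
    and h_indep: "prob_space.indep_vars Q (\<lambda>_. borel) (\<lambda>(n, x). h n x) (UNIV \<times> lattice d)"
    and h_plus: "\<And>n x. x \<in> lattice d \<Longrightarrow> measure Q {q \<in> space Q. h n x q = 1} = 1 / 2"
    and h_minus: "\<And>n x. x \<in> lattice d \<Longrightarrow> measure Q {q \<in> space Q. h n x q = - 1} = 1 / 2"
  shows "\<forall>\<epsilon>>0. (\<lambda>N. measure Q {q \<in> space Q.
            \<bar>mean_sq_disp d (c N) (\<lambda>n x. h n x q) N / real N - 1\<bar> > \<epsilon>}) \<longlonglongrightarrow> 0"
proof -
  interpret polymer_env Q d h
    by (intro polymer_env.intro polymer_env_axioms.intro Q h_meas h_indep h_plus h_minus)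
  show ?thesis by (rule main[OF d c1 c2])
qed


end
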